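(* For every $j\in\{1,\dots,k\}$, the exemplar mean $x_j^n$ does not converge in probability (to any random variable) as $n\to\infty$.
   Context: The $k$-means exemplar model: $E\subseteq\mathbb{R}^N$ bounded, convex, closed with non-empty interior; $P$ a probability measure on $E$ with density $f>0$ on $E$; $k\ge2$ categories; decay rate $\lambda>0$; initial means $x_1^0,\dots,x_k^0\in E$ pairwise distinct and initial weights $w_1^0,\dots,w_k^0>0$; $z_0,z_1,\dots$ i.i.d. with law $P$. For $n\ge0$, with $i$ the smallest index minimizing $|z_n-x_i^n|$: $x_i^{n+1}=\frac{x_i^n w_i^n e^{-\lambda}+z_n}{w_i^n e^{-\lambda}+1}$, $w_i^{n+1}=w_i^n e^{-\lambda}+1$, and for $j\ne i$, $x_j^{n+1}=x_j^n$, $w_j^{n+1}=w_j^n e^{-\lambda}$. *)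

theory Defs
  imports "HOL-Probability.Probability"
begin

definition winner :: "nat \<Rightarrow> 'a::metric_space \<Rightarrow> (nat \<Rightarrow> 'a) \<Rightarrow> nat" where
  "winner k z xs = (LEAST i. i \<in> {1..k} \<and> (\<forall>j\<in>{1..k}. dist z (xs i) \<le> dist z (xs j)))"

definition kme_step :: "real \<Rightarrow> nat \<Rightarrow> 'a::real_normed_vector
    \<Rightarrow> (nat \<Rightarrow> 'a) \<times> (nat \<Rightarrow> real) \<Rightarrow> (nat \<Rightarrow> 'a) \<times> (nat \<Rightarrow> real)" where
  "kme_step lam k z s =
     (let xs = fst s; ws = snd s; i = winner k z xs in
      ((\<lambda>j. if j = i then (1 / (ws j * exp (- lam) + 1)) *\<^sub>R
                            ((ws j * exp (- lam)) *\<^sub>R xs j + z)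
            else xs j),
       (\<lambda>j. if j = i then ws j * exp (- lam) + 1 else ws j * exp (- lam))))"

primrec kme_state :: "real \<Rightarrow> nat \<Rightarrow> (nat \<Rightarrow> 'a::real_normed_vector) \<Rightarrow> (nat \<Rightarrow> real)
    \<Rightarrow> (nat \<Rightarrow> 'a) \<Rightarrow> nat \<Rightarrow> (nat \<Rightarrow> 'a) \<times> (nat \<Rightarrow> real)" where
  "kme_state lam k x0 w0 zs 0 = (x0, w0)"
| "kme_state lam k x0 w0 zs (Suc n) = kme_step lam k (zs n) (kme_state lam k x0 w0 zs n)"

definition conv_in_prob :: "'b measure \<Rightarrow> (nat \<Rightarrow> 'b \<Rightarrow> 'a::metric_space) \<Rightarrow> ('b \<Rightarrow> 'a) \<Rightarrow> bool" where
  "conv_in_prob M X Y \<longleftrightarrow>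
     (\<forall>e>0. (\<lambda>n. measure M {\<omega> \<in> space M. dist (X n \<omega>) (Y \<omega>) > e}) \<longlonglongrightarrow> 0)"

end

theory Submission
  imports Defs
begin


lemma upd_facts:
  fixes x z :: "'a::real_normed_vector"
  assumes a: "0 \<le> a" "a \<le> A"
  defines "y \<equiv> (1 / (a + 1)) *\<^sub>R (a *\<^sub>R x + z)"
  shows "dist y z \<le> (1 - 1/(A+1)) * dist x z"
    and "dist y x \<ge> (1/(A+1)) * dist z x"
    and "y \<in> closed_segment x z"
proof -
  have ne: "a + 1 \<noteq> 0" using a by auto
  define b where "b = 1/(a+1)"
  have b1: "a/(a+1) = 1 - b" unfolding b_def using ne by (simp add: field_simps)
  have y2: "y = (1 - b) *\<^sub>R x + b *\<^sub>R z"
    unfolding y_def scaleR_add_right scaleR_scaleR b_def[symmetric] b1[symmetric]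
    by (simp add: b_def)
  have yz: "y - z = (1 - b) *\<^sub>R (x - z)"
    unfolding y2 by (simp add: algebra_simps)
  have yx: "y - x = b *\<^sub>R (z - x)"
    unfolding y2 by (simp add: algebra_simps)
  have bpos: "0 < b" "b \<le> 1" unfolding b_def using a by auto
  have c2: "1/(A+1) \<le> b" unfolding b_def using a by (intro divide_left_mono) auto
  have c1: "1 - b \<le> 1 - 1/(A+1)" using c2 by simp
  show "dist y z \<le> (1 - 1/(A+1)) * dist x z"
    unfolding dist_norm yz using bpos c1 by (simp add: mult_right_mono)
  show "dist y x \<ge> (1/(A+1)) * dist z x"
    unfolding dist_norm yx using bpos mult_right_mono[OF c2 norm_ge_zero[of "z-x"]] by simp
  show "y \<in> closed_segment x z"
    unfolding closed_segment_def using bpos y2 by auto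
qed



lemma kme_step_fst: "fst (kme_step lam k z s) j =
  (if j = winner k z (fst s) then (1 / (snd s j * exp (- lam) + 1)) *\<^sub>R ((snd s j * exp (- lam)) *\<^sub>R fst s j + z) else fst s j)"
  by (simp add: kme_step_def Let_def)

lemma kme_step_snd: "snd (kme_step lam k z s) j =
  (if j = winner k z (fst s) then snd s j * exp (- lam) + 1 else snd s j * exp (- lam))"
  by (simp add: kme_step_def Let_def)

lemma winner_prop:
  fixes xs :: "nat \<Rightarrow> 'a::metric_space"
  assumes "k \<ge> 1"
  shows "winner k z xs \<in> {1..k} \<and> (\<forall>l\<in>{1..k}. dist z (xs (winner k z xs)) \<le> dist z (xs l))"
proof -
  have fin: "finite ((\<lambda>l. dist z (xs l)) ` {1..k})" by simp
  have ne: "(\<lambda>l. dist z (xs l)) ` {1..k} \<noteq> {}" using assms by auto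
  obtain i where i: "i \<in> {1..k}" "dist z (xs i) = Min ((\<lambda>l. dist z (xs l)) ` {1..k})"
    using Min_in[OF fin ne] by auto
  have "i \<in> {1..k} \<and> (\<forall>l\<in>{1..k}. dist z (xs i) \<le> dist z (xs l))"
    using i fin by auto
  then show ?thesis unfolding winner_def by (rule LeastI)
qed

definition Good :: "real \<Rightarrow> nat \<Rightarrow> (nat \<Rightarrow> 'a) \<times> (nat \<Rightarrow> real) \<Rightarrow> bool" where
  "Good W k s \<longleftrightarrow> (\<forall>i\<in>{1..k}. 0 \<le> snd s i \<and> snd s i \<le> W)"

lemma step_facts:
  fixes s :: "(nat \<Rightarrow> 'a::real_normed_vector) \<times> (nat \<Rightarrow> real)" and z :: 'a and lam :: real
  assumes k: "k \<ge> 1" and G: "Good W k s"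
  defines "i \<equiv> winner k z (fst s)"
  defines "a0 \<equiv> 1 / (W * exp (- lam) + 1)"
  shows "i \<in> {1..k}" "\<And>l. l \<in> {1..k} \<Longrightarrow> dist z (fst s i) \<le> dist z (fst s l)"
    "\<And>l. l \<noteq> i \<Longrightarrow> fst (kme_step lam k z s) l = fst s l"
    "dist (fst (kme_step lam k z s) i) z \<le> (1 - a0) * dist (fst s i) z"
    "dist (fst (kme_step lam k z s) i) (fst s i) \<ge> a0 * dist z (fst s i)"
    "fst (kme_step lam k z s) i \<in> closed_segment (fst s i) z"
    "W * (1 - exp (- lam)) \<ge> 1 \<Longrightarrow> Good W k (kme_step lam k z s)"
proof -
  show i: "i \<in> {1..k}" "\<And>l. l \<in> {1..k} \<Longrightarrow> dist z (fst s i) \<le> dist z (fst s l)"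
    using winner_prop[OF k, of z "fst s"] unfolding i_def by auto
  show "\<And>l. l \<noteq> i \<Longrightarrow> fst (kme_step lam k z s) l = fst s l"
    by (simp add: kme_step_fst i_def)
  have w: "0 \<le> snd s i" "snd s i \<le> W" using G i(1) unfolding Good_def by auto
  have a: "0 \<le> snd s i * exp (- lam)" "snd s i * exp (- lam) \<le> W * exp (- lam)"
    using w by (auto intro: mult_right_mono)
  note U = upd_facts[OF a, where x="fst s i" and z=z]
  have e: "fst (kme_step lam k z s) i = (1 / (snd s i * exp (- lam) + 1)) *\<^sub>R ((snd s i * exp (- lam)) *\<^sub>R fst s i + z)"
    by (simp add: kme_step_fst i_def)
  show "dist (fst (kme_step lam k z s) i) z \<le> (1 - a0) * dist (fst s i) z"
    using U(1) unfolding e a0_def .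
  show "dist (fst (kme_step lam k z s) i) (fst s i) \<ge> a0 * dist z (fst s i)"
    using U(2) unfolding e a0_def .
  show "fst (kme_step lam k z s) i \<in> closed_segment (fst s i) z"
    using U(3) unfolding e .
  assume W: "W * (1 - exp (- lam)) \<ge> 1"
  show "Good W k (kme_step lam k z s)"
    unfolding Good_def
  proof
    fix l assume l: "l \<in> {1..k}"
    have wl: "0 \<le> snd s l" "snd s l \<le> W" using G l unfolding Good_def by auto
    have W0: "0 \<le> W" using wl by linarith
    have ex: "exp (- lam) \<le> 1 \<or> True" by simp
    have h1: "snd s l * exp (- lam) \<le> W * exp (- lam)" using wl by (auto intro: mult_right_mono)
    have h2: "W * exp (- lam) + 1 \<le> W" using W by (simp add: algebra_simps)
    have h3: "0 \<le> snd s l * exp (- lam)" using wl by simp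
    show "0 \<le> snd (kme_step lam k z s) l \<and> snd (kme_step lam k z s) l \<le> W"
    proof (cases "l = winner k z (fst s)")
      case True
      have "snd (kme_step lam k z s) l = snd s l * exp (- lam) + 1" using True by (simp add: kme_step_snd)
      then show ?thesis using h1 h2 h3 by linarith
    next
      case False
      have "snd (kme_step lam k z s) l = snd s l * exp (- lam)" using False by (simp add: kme_step_snd)
      then show ?thesis using h1 h2 h3 W0 by linarith
    qed
  qed
qed

lemma kme_state_shift:
  "kme_state lam k x0 w0 zs (n + m) =
   kme_state lam k (fst (kme_state lam k x0 w0 zs n)) (snd (kme_state lam k x0 w0 zs n)) (\<lambda>i. zs (n + i)) m"
  by (induction m) auto

lemma kme_state_cong:
  "(\<And>m. m < n \<Longrightarrow> zs m = zs' m) \<Longrightarrow> kme_state lam k x0 w0 zs n = kme_state lam k x0 w0 zs' n"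
  by (induction n) auto

lemma kme_state_Good:
  assumes "k \<ge> 1" "Good W k (x0, w0)" "W * (1 - exp (- lam)) \<ge> 1"
  shows "Good W k (kme_state lam k x0 w0 zs n)"
  using assms by (induction n) (auto intro: step_facts(7))

lemma kme_state_in:
  fixes x0 :: "nat \<Rightarrow> 'a::real_normed_vector"
  assumes "k \<ge> 1" "Good W k (x0, w0)" "W * (1 - exp (- lam)) \<ge> 1" "convex E"
    "\<And>i. i \<in> {1..k} \<Longrightarrow> x0 i \<in> E" "\<And>m. m < n \<Longrightarrow> zs m \<in> E"
  shows "\<And>i. i \<in> {1..k} \<Longrightarrow> fst (kme_state lam k x0 w0 zs n) i \<in> E"
  using assms(6)
proof (induction n)
  case 0 then show ?case using assms(5) by simp
next
  case (Suc n)
  let ?s = "kme_state lam k x0 w0 zs n"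
  have G: "Good W k ?s" using kme_state_Good assms(1-3) by blast
  show ?case
  proof (cases "i = winner k (zs n) (fst ?s)")
    case True
    have "fst (kme_step lam k (zs n) ?s) i \<in> closed_segment (fst ?s i) (zs n)"
      using step_facts(6)[OF assms(1) G] True by simp
    moreover have "closed_segment (fst ?s i) (zs n) \<subseteq> E"
      using Suc assms(4) by (intro closed_segment_subset) auto
    ultimately show ?thesis by auto
  next
    case False
    then show ?thesis using Suc step_facts(3)[OF assms(1) G] by simp
  qed
qed



lemma core:
  fixes s :: "(nat \<Rightarrow> 'a::real_normed_vector) \<times> (nat \<Rightarrow> real)" and \<zeta> :: "nat \<Rightarrow> 'a"
    and \<tau> :: "nat \<Rightarrow> 'a" and p :: 'a and lam :: real
  assumes k: "k \<ge> 1" and j: "j \<in> {1..k}" and G: "Good W k s" and W: "W * (1 - exp (-lam)) \<ge> 1"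
  defines "a0 \<equiv> 1/(W*exp(-lam)+1)"
  assumes xp: "dist (fst s j) p < \<delta>"
    and tp: "\<And>i. i < k \<Longrightarrow> dist p (\<tau> i) = \<sigma> i"
    and tt: "\<And>l i. l < i \<Longrightarrow> i < k \<Longrightarrow> dist (\<tau> l) (\<tau> i) \<ge> 2 * \<sigma> i"
    and sm: "\<And>i. i < k \<Longrightarrow> \<sigma>m \<le> \<sigma> i" and sM: "\<And>i. i < k \<Longrightarrow> \<sigma> i \<le> Sx"
    and sgap: "2*\<eta> + \<gamma> + \<delta> < \<sigma>m" and eta: "0 < \<eta>"
    and RR: "(1-a0)^R * (Sx+\<delta>) + 2*\<eta>/a0 \<le> \<gamma>"
    and zt: "\<And>m. m < k*R \<Longrightarrow> dist (\<zeta> m) (\<tau> (m div R)) < \<eta>"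
  shows "\<exists>m<k*R. dist (fst (kme_state lam k (fst s) (snd s) \<zeta> (Suc m)) j) (fst s j) \<ge> a0*(\<sigma>m - \<eta> - \<delta>)"
proof (rule ccontr)
  assume neg: "\<not> (\<exists>m<k*R. dist (fst (kme_state lam k (fst s) (snd s) \<zeta> (Suc m)) j) (fst s j) \<ge> a0*(\<sigma>m - \<eta> - \<delta>))"
  define S where "S = kme_state lam k (fst s) (snd s) \<zeta>"
  define x where "x = fst s j"
  have GS: "\<And>m. Good W k (S m)" unfolding S_def
    by (rule kme_state_Good[OF k _ W]) (use G in simp)
  have SS: "\<And>m. S (Suc m) = kme_step lam k (\<zeta> m) (S m)" unfolding S_def by simp
  have S0: "S 0 = s" unfolding S_def by simp
  have d0: "0 \<le> \<delta>" using xp zero_le_dist[of "fst s j" p] by linarith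
  have W0: "0 \<le> W" using G j unfolding Good_def by force
  have We: "0 \<le> W * exp (-lam)" using W0 by simp
  have a0pos: "0 < a0" "a0 \<le> 1" unfolding a0_def using We by (auto simp: divide_simps)
  have SF1: "winner k (\<zeta> m) (fst (S m)) \<in> {1..k}" for m using step_facts(1)[OF k GS[of m]] .
  have SF2: "l \<in> {1..k} \<Longrightarrow> dist (\<zeta> m) (fst (S m) (winner k (\<zeta> m) (fst (S m)))) \<le> dist (\<zeta> m) (fst (S m) l)" for l m
    using step_facts(2)[OF k GS[of m]] .
  have SF3: "l \<noteq> winner k (\<zeta> m) (fst (S m)) \<Longrightarrow> fst (S (Suc m)) l = fst (S m) l" for l m
    unfolding SS by (rule step_facts(3)[OF k GS[of m]])
  have SF4: "dist (fst (S (Suc m)) (winner k (\<zeta> m) (fst (S m)))) (\<zeta> m) \<le> (1 - a0) * dist (fst (S m) (winner k (\<zeta> m) (fst (S m)))) (\<zeta> m)" for m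
    unfolding SS a0_def by (rule step_facts(4)[OF k GS[of m]])
  have SF5: "dist (fst (S (Suc m)) (winner k (\<zeta> m) (fst (S m)))) (fst (S m) (winner k (\<zeta> m) (fst (S m)))) \<ge> a0 * dist (\<zeta> m) (fst (S m) (winner k (\<zeta> m) (fst (S m))))" for m
    unfolding SS a0_def by (rule step_facts(5)[OF k GS[of m]])
  have keep: "\<And>m. (\<forall>m'<m. winner k (\<zeta> m') (fst (S m')) \<noteq> j) \<Longrightarrow> fst (S m) j = x"
  proof -
    fix m show "(\<forall>m'<m. winner k (\<zeta> m') (fst (S m')) \<noteq> j) \<Longrightarrow> fst (S m) j = x"
    proof (induction m)
      case 0 then show ?case by (simp add: S0 x_def)
    next
      case (Suc m)
      then have "winner k (\<zeta> m) (fst (S m)) \<noteq> j" by auto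
      then have "fst (S (Suc m)) j = fst (S m) j" using SF3[of j m] by metis
      then show ?case using Suc by auto
    qed
  qed
  have divk: "\<And>m. m < k*R \<Longrightarrow> m div R < k"
    by (metis less_mult_imp_div_less mult.commute)
  have nowin: "\<forall>m<k*R. winner k (\<zeta> m) (fst (S m)) \<noteq> j"
  proof (rule ccontr)
    assume "\<not> (\<forall>m<k*R. winner k (\<zeta> m) (fst (S m)) \<noteq> j)"
    then have ex: "\<exists>m. m < k*R \<and> winner k (\<zeta> m) (fst (S m)) = j" by auto
    define m0 where "m0 = (LEAST m. m < k*R \<and> winner k (\<zeta> m) (fst (S m)) = j)"
    have m0: "m0 < k*R" "winner k (\<zeta> m0) (fst (S m0)) = j"
      using LeastI_ex[OF ex] unfolding m0_def by auto
    have "\<forall>m'<m0. winner k (\<zeta> m') (fst (S m')) \<noteq> j"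
    proof (intro allI impI)
      fix m' assume "m' < m0"
      then have "\<not> (m' < k*R \<and> winner k (\<zeta> m') (fst (S m')) = j)"
        unfolding m0_def by (rule not_less_Least)
      then show "winner k (\<zeta> m') (fst (S m')) \<noteq> j" using \<open>m' < m0\<close> m0(1) by auto
    qed
    then have xm0: "fst (S m0) j = x" by (rule keep)
    have d1: "dist (fst (S (Suc m0)) j) x \<ge> a0 * dist (\<zeta> m0) x"
      using SF5[of m0] m0(2) xm0 by simp
    have i: "m0 div R < k" using divk m0(1) .
    have "\<sigma> (m0 div R) \<le> dist p x + dist x (\<zeta> m0) + dist (\<zeta> m0) (\<tau> (m0 div R))"
      using tp[OF i] dist_triangle[of p "\<tau> (m0 div R)" x] dist_triangle[of x "\<tau> (m0 div R)" "\<zeta> m0"] by linarith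
    moreover have "dist p x < \<delta>" using xp unfolding x_def by (simp add: dist_commute)
    moreover have "dist (\<zeta> m0) (\<tau> (m0 div R)) < \<eta>" using zt m0(1) by blast
    moreover have "\<sigma>m \<le> \<sigma> (m0 div R)" using sm i by blast
    ultimately have "\<sigma>m - \<eta> - \<delta> \<le> dist (\<zeta> m0) x" by (simp add: dist_commute)
    then have "a0*(\<sigma>m - \<eta> - \<delta>) \<le> a0 * dist (\<zeta> m0) x" using a0pos by (simp add: mult_left_mono)
    then have "dist (fst (S (Suc m0)) j) x \<ge> a0*(\<sigma>m - \<eta> - \<delta>)" using d1 by linarith
    then show False using neg m0(1) unfolding S_def x_def by blast
  qed
  have xconst: "\<And>m. m \<le> k*R \<Longrightarrow> fst (S m) j = x"
    using keep nowin by auto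
  define b where "b t = (1-a0)^t * (Sx+\<delta>) + 2*\<eta>/a0" for t
  have phase: "\<And>i. i \<le> k \<Longrightarrow> \<exists>P. inj_on P {..<i} \<and> P ` {..<i} \<subseteq> {1..k} - {j} \<and>
                    (\<forall>l<i. dist (fst (S (i*R)) (P l)) (\<tau> l) \<le> \<gamma>)"
  proof -
    fix i show "i \<le> k \<Longrightarrow> \<exists>P. inj_on P {..<i} \<and> P ` {..<i} \<subseteq> {1..k} - {j} \<and>
                    (\<forall>l<i. dist (fst (S (i*R)) (P l)) (\<tau> l) \<le> \<gamma>)"
    proof (induction i)
      case 0 then show ?case by auto
    next
      case (Suc i)
      then have ik: "i < k" by simp
      obtain P where P: "inj_on P {..<i}" "P ` {..<i} \<subseteq> {1..k} - {j}"
        "\<And>l. l<i \<Longrightarrow> dist (fst (S (i*R)) (P l)) (\<tau> l) \<le> \<gamma>"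
        using Suc by auto
      have si: "\<sigma>m \<le> \<sigma> i" "\<sigma> i \<le> Sx" "dist p (\<tau> i) = \<sigma> i" using sm sM tp ik by auto
      have inner: "\<And>t. t \<le> R \<Longrightarrow> (\<forall>l<i. fst (S (i*R+t)) (P l) = fst (S (i*R)) (P l)) \<and>
                      (\<exists>q\<in>{1..k}. dist (fst (S (i*R+t)) q) (\<tau> i) \<le> b t)"
      proof -
        fix t show "t \<le> R \<Longrightarrow> (\<forall>l<i. fst (S (i*R+t)) (P l) = fst (S (i*R)) (P l)) \<and>
                      (\<exists>q\<in>{1..k}. dist (fst (S (i*R+t)) q) (\<tau> i) \<le> b t)"
        proof (induction t)
          case 0
          have "i * R \<le> k * R" using ik by simp
          then have xj: "fst (S (i*R)) j = x" using xconst by blast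
          have "dist x (\<tau> i) \<le> dist x p + dist p (\<tau> i)" by (rule dist_triangle)
          also have "\<dots> \<le> Sx + \<delta>" using xp si unfolding x_def by simp
          also have "\<dots> \<le> b 0" unfolding b_def using eta a0pos by simp
          finally show ?case using xj j by auto
        next
          case (Suc t)
          then have tR: "t < R" by simp
          from Suc obtain q where q: "q \<in> {1..k}" "dist (fst (S (i*R+t)) q) (\<tau> i) \<le> b t"
            and park: "\<forall>l<i. fst (S (i*R+t)) (P l) = fst (S (i*R)) (P l)" by auto
          define m where "m = i*R+t"
          have mk: "m < k*R"
          proof -
            have "m < i*R + R" unfolding m_def using tR by simp
            also have "\<dots> = Suc i * R" by simp
            also have "\<dots> \<le> k * R" using ik by (intro mult_right_mono) auto
            finally show ?thesis .
          qed
          have mdiv: "m div R = i" unfolding m_def using tR by simp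
          have zi: "dist (\<zeta> m) (\<tau> i) < \<eta>" using zt[OF mk] mdiv by simp
          define w where "w = winner k (\<zeta> m) (fst (S m))"
          have wj: "w \<noteq> j" using nowin mk unfolding w_def by blast
          have w1: "w \<in> {1..k}" using SF1[of m] unfolding w_def .
          have wmin: "\<And>l. l \<in> {1..k} \<Longrightarrow> dist (\<zeta> m) (fst (S m) w) \<le> dist (\<zeta> m) (fst (S m) l)"
            using SF2[of _ m] unfolding w_def by blast
          have xjm: "fst (S m) j = x" using xconst mk by simp
          have dzx: "dist (\<zeta> m) x < \<eta> + \<sigma> i + \<delta>"
          proof -
            have "dist (\<zeta> m) x \<le> dist (\<zeta> m) (\<tau> i) + dist (\<tau> i) x" by (rule dist_triangle)
            also have "dist (\<tau> i) x \<le> dist (\<tau> i) p + dist p x" by (rule dist_triangle)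
            finally show ?thesis using zi si xp unfolding x_def by (simp add: dist_commute)
          qed
          have dw: "dist (\<zeta> m) (fst (S m) w) < \<eta> + \<sigma> i + \<delta>"
            using wmin[OF j] xjm dzx by simp
          have wP: "\<And>l. l < i \<Longrightarrow> w \<noteq> P l"
          proof
            fix l assume l: "l < i" and e: "w = P l"
            have pl: "fst (S m) (P l) = fst (S (i*R)) (P l)" using park l unfolding m_def by blast
            have g: "dist (fst (S m) (P l)) (\<tau> l) \<le> \<gamma>" using P(3)[OF l] pl by simp
            have "dist (\<tau> l) (\<tau> i) \<le> dist (\<tau> l) (fst (S m) (P l)) + dist (fst (S m) (P l)) (\<zeta> m) + dist (\<zeta> m) (\<tau> i)"
              using dist_triangle[of "\<tau> l" "\<tau> i" "fst (S m) (P l)"] dist_triangle[of "fst (S m) (P l)" "\<tau> i" "\<zeta> m"] by linarith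
            moreover have "2 * \<sigma> i \<le> dist (\<tau> l) (\<tau> i)" using tt l ik by blast
            ultimately have "2 * \<sigma> i - \<gamma> - \<eta> < dist (\<zeta> m) (fst (S m) (P l))"
              using g zi by (simp add: dist_commute)
            moreover have "\<eta> + \<sigma> i + \<delta> \<le> 2 * \<sigma> i - \<gamma> - \<eta>" using sgap si by linarith
            ultimately show False using dw e by simp
          qed
          have park': "\<forall>l<i. fst (S (i*R + Suc t)) (P l) = fst (S (i*R)) (P l)"
          proof (intro allI impI)
            fix l assume l: "l < i"
            have "fst (S (Suc m)) (P l) = fst (S m) (P l)"
              using SF3[of "P l" m] wP[OF l] unfolding w_def by metis
            then show "fst (S (i*R + Suc t)) (P l) = fst (S (i*R)) (P l)"
              using park l unfolding m_def by simp
          qed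
          have "dist (fst (S (Suc m)) w) (\<tau> i) \<le> dist (fst (S (Suc m)) w) (\<zeta> m) + dist (\<zeta> m) (\<tau> i)"
            by (rule dist_triangle)
          also have "dist (fst (S (Suc m)) w) (\<zeta> m) \<le> (1 - a0) * dist (fst (S m) w) (\<zeta> m)"
            using SF4[of m] unfolding w_def .
          also have "dist (fst (S m) w) (\<zeta> m) \<le> b t + \<eta>"
          proof -
            have "dist (fst (S m) w) (\<zeta> m) \<le> dist (\<zeta> m) (fst (S m) q)"
              using wmin[OF q(1)] by (simp add: dist_commute)
            also have "\<dots> \<le> dist (\<zeta> m) (\<tau> i) + dist (\<tau> i) (fst (S m) q)" by (rule dist_triangle)
            finally show ?thesis using zi q(2) unfolding m_def by (simp add: dist_commute)
          qed
          finally have "dist (fst (S (Suc m)) w) (\<tau> i) \<le> (1 - a0) * (b t + \<eta>) + \<eta>"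
            using zi a0pos by (smt (verit) mult_left_mono)
          also have "\<dots> \<le> b (Suc t)"
          proof -
            have "(1 - a0) * (b t + \<eta>) + \<eta> = (1-a0)^(Suc t) * (Sx+\<delta>) + (1-a0)*(2*\<eta>/a0) + (2 - a0)*\<eta>"
              unfolding b_def by (simp add: algebra_simps)
            also have "(1-a0)*(2*\<eta>/a0) = 2*\<eta>/a0 - 2*\<eta>" using a0pos by (simp add: field_simps)
            finally show ?thesis unfolding b_def using a0pos eta by (simp add: algebra_simps)
          qed
          finally have "dist (fst (S (i*R + Suc t)) w) (\<tau> i) \<le> b (Suc t)" unfolding m_def by simp
          then show ?case using park' w1 by blast
        qed
      qed
      from inner[of R] obtain q where q: "q \<in> {1..k}" "dist (fst (S (i*R+R)) q) (\<tau> i) \<le> b R"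
        and park: "\<forall>l<i. fst (S (i*R+R)) (P l) = fst (S (i*R)) (P l)" by auto
      have bR: "b R \<le> \<gamma>" unfolding b_def using RR .
      have e: "Suc i * R = i*R+R" by simp
      have qj: "q \<noteq> j"
      proof
        assume "q = j"
        then have "fst (S (i*R+R)) q = x" using xconst[of "i*R+R"] ik e
          by (metis Suc_leI mult_le_mono1)
        then have dq: "dist x (\<tau> i) \<le> b R" using q(2) by simp
        have "\<sigma> i \<le> dist p x + dist x (\<tau> i)" using si(3) dist_triangle[of p "\<tau> i" x] by linarith
        moreover have "dist p x < \<delta>" using xp unfolding x_def by (simp add: dist_commute)
        ultimately show False using dq bR sgap si eta by linarith
      qed
      have qP: "\<And>l. l < i \<Longrightarrow> q \<noteq> P l"
      proof
        fix l assume l: "l < i" and e: "q = P l"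
        have g: "dist (fst (S (i*R+R)) (P l)) (\<tau> l) \<le> \<gamma>" using P(3)[OF l] park l by simp
        have "dist (\<tau> l) (\<tau> i) \<le> dist (\<tau> l) (fst (S (i*R+R)) (P l)) + dist (fst (S (i*R+R)) (P l)) (\<tau> i)"
          by (rule dist_triangle)
        moreover have "2 * \<sigma> i \<le> dist (\<tau> l) (\<tau> i)" using tt l ik by blast
        ultimately show False using g q(2) e bR sgap si eta d0 by (simp add: dist_commute)
      qed
      define P' where "P' = P(i := q)"
      have "inj_on P' {..<Suc i}"
      proof -
        have i1: "inj_on P' {..<i}" using P(1) unfolding P'_def inj_on_def by auto
        have i2: "P' i \<notin> P' ` ({..<i} - {i})" using qP unfolding P'_def by auto
        have "inj_on P' (insert i {..<i})" using inj_on_insert[of P' i "{..<i}"] i1 i2 by blast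
        then show ?thesis by (simp add: lessThan_Suc)
      qed
      moreover have "P' ` {..<Suc i} \<subseteq> {1..k} - {j}"
      proof (rule image_subsetI)
        fix l assume "l \<in> {..<Suc i}"
        then consider "l < i" | "l = i" by fastforce
        then show "P' l \<in> {1..k} - {j}"
        proof cases
          case 1 then have "P' l = P l" unfolding P'_def by simp
          then show ?thesis using P(2) 1 by auto
        next
          case 2 then show ?thesis using q(1) qj unfolding P'_def by simp
        qed
      qed
      moreover have "\<forall>l<Suc i. dist (fst (S (Suc i * R)) (P' l)) (\<tau> l) \<le> \<gamma>"
      proof (intro allI impI)
        fix l assume "l < Suc i"
        then consider "l < i" | "l = i" by linarith
        then show "dist (fst (S (Suc i * R)) (P' l)) (\<tau> l) \<le> \<gamma>"
        proof cases
          case 1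
          then have "P' l = P l" unfolding P'_def by simp
          moreover have "fst (S (i*R+R)) (P l) = fst (S (i*R)) (P l)" using park 1 by blast
          ultimately show ?thesis using P(3)[OF 1] by (simp only: e)
        next
          case 2
          then have "P' l = q" unfolding P'_def by simp
          then show ?thesis using q(2) bR 2 by (simp only: e)
        qed
      qed
      ultimately show ?case by blast
    qed
  qed
  obtain P where P: "inj_on P {..<k}" "P ` {..<k} \<subseteq> {1..k} - {j}"
    using phase[of k] by auto
  have "card {..<k} \<le> card ({1..k} - {j})"
    by (rule card_inj_on_le[OF P]) simp
  then show False using j k by simp linarith
qed



lemma meas_winner[measurable]:
  fixes z :: "'b \<Rightarrow> 'a::euclidean_space"
  assumes [measurable]: "z \<in> borel_measurable N" "\<And>l. (\<lambda>\<omega>. xs \<omega> l) \<in> borel_measurable N"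
  shows "(\<lambda>\<omega>. winner k (z \<omega>) (xs \<omega>)) \<in> measurable N (count_space UNIV)"
  unfolding winner_def by measurable

lemma meas_state:
  fixes \<zeta> :: "nat \<Rightarrow> 'b \<Rightarrow> 'a::euclidean_space"
  assumes "\<And>m. m < n \<Longrightarrow> \<zeta> m \<in> borel_measurable N"
  shows "(\<lambda>\<omega>. fst (kme_state lam k x0 w0 (\<lambda>m. \<zeta> m \<omega>) n) i) \<in> borel_measurable N \<and>
         (\<lambda>\<omega>. snd (kme_state lam k x0 w0 (\<lambda>m. \<zeta> m \<omega>) n) i) \<in> borel_measurable N"
  using assms
proof (induction n arbitrary: i)
  case 0 then show ?case by simp
next
  case (Suc n)
  have IH[measurable]: "\<And>l. (\<lambda>\<omega>. fst (kme_state lam k x0 w0 (\<lambda>m. \<zeta> m \<omega>) n) l) \<in> borel_measurable N"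
     "\<And>l. (\<lambda>\<omega>. snd (kme_state lam k x0 w0 (\<lambda>m. \<zeta> m \<omega>) n) l) \<in> borel_measurable N"
    using Suc by auto
  have zn[measurable]: "\<zeta> n \<in> borel_measurable N" using Suc by auto
  show ?case
    unfolding kme_state.simps kme_step_fst kme_step_snd by measurable
qed



lemma dist_emeasure:
  fixes X :: "'w \<Rightarrow> 'a::euclidean_space"
  assumes D: "distributed M lborel X (\<lambda>x. ennreal (f x))" and A: "A \<in> sets borel"
  shows "emeasure M (X -` A \<inter> space M) = (\<integral>\<^sup>+ x. ennreal (f x) * indicator A x \<partial>lborel)"
proof -
  have "emeasure M (X -` A \<inter> space M) = emeasure (distr M lborel X) A"
    using A distributed_measurable[OF D] by (simp add: emeasure_distr)
  also have "\<dots> = emeasure (density lborel (\<lambda>x. ennreal (f x))) A"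
    using distributed_distr_eq_density[OF D] by simp
  also have "\<dots> = (\<integral>\<^sup>+ x. ennreal (f x) * indicator A x \<partial>lborel)"
    using A distributed_borel_measurable[OF D] by (simp add: emeasure_density)
  finally show ?thesis .
qed

lemma dist_outside_null:
  fixes X :: "'w \<Rightarrow> 'a::euclidean_space"
  assumes D: "distributed M lborel X (\<lambda>x. ennreal (f x))" and E: "closed E"
    and f0: "\<And>x. x \<notin> E \<Longrightarrow> f x = 0"
  shows "emeasure M (X -` (- E) \<inter> space M) = 0"
proof -
  have "- E \<in> sets borel" using E by auto
  then have "emeasure M (X -` (- E) \<inter> space M) = (\<integral>\<^sup>+ x. ennreal (f x) * indicator (- E) x \<partial>lborel)"
    by (rule dist_emeasure[OF D])
  also have "(\<lambda>x. ennreal (f x) * indicator (- E) x) = (\<lambda>x. 0)"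
    by (auto simp: fun_eq_iff f0 indicator_def)
  finally show ?thesis by simp
qed

lemma dist_ball_pos:
  fixes X :: "'w \<Rightarrow> 'a::euclidean_space"
  assumes D: "distributed M lborel X (\<lambda>x. ennreal (f x))" and E: "convex E" "interior E \<noteq> {}"
    and fp: "\<And>x. x \<in> E \<Longrightarrow> f x > 0" and t: "t \<in> E" and eta: "0 < \<eta>"
  shows "emeasure M (X -` ball t \<eta> \<inter> space M) > 0"
proof -
  have "t \<in> closure (interior E)" using convex_closure_interior[OF E] t closure_subset by blast
  then obtain y where y: "y \<in> interior E" "dist y t < \<eta>" using closure_approachable eta by blast
  obtain r where r: "r > 0" "ball y r \<subseteq> interior E" using y(1) open_interior open_contains_ball by blast
  define r' where "r' = min r (\<eta> - dist y t)"
  have r': "r' > 0" using r y unfolding r'_def by auto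
  have sub: "ball y r' \<subseteq> ball t \<eta>"
  proof
    fix x assume "x \<in> ball y r'"
    then have "dist y x < \<eta> - dist y t" unfolding r'_def by auto
    then show "x \<in> ball t \<eta>" using dist_triangle[of t x y] by (simp add: dist_commute)
  qed
  have subE: "ball y r' \<subseteq> E" using r(2) interior_subset unfolding r'_def by fastforce
  have fm: "(\<lambda>x. ennreal (f x)) \<in> borel_measurable borel" using distributed_borel_measurable[OF D] by simp
  note fm[measurable]
  have fm1: "(\<lambda>x. ennreal (f x) * indicator (ball y r') x) \<in> borel_measurable borel"
    by (rule borel_measurable_times_ennreal[OF fm]) (rule borel_measurable_indicator, simp)
  then have fm2: "(\<lambda>x. ennreal (f x) * indicator (ball y r') x) \<in> borel_measurable lborel"
    by simp
  have "0 < (\<integral>\<^sup>+ x. ennreal (f x) * indicator (ball y r') x \<partial>lborel)"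
  proof (rule ccontr)
    assume "\<not> ?thesis"
    then have "(\<integral>\<^sup>+ x. ennreal (f x) * indicator (ball y r') x \<partial>lborel) = 0" by (simp add: not_less)
    then have "AE x in lborel. ennreal (f x) * indicator (ball y r') x = 0"
      using fm2 by (subst (asm) nn_integral_0_iff_AE) auto
    then have "AE x in lborel. x \<notin> ball y r'"
    proof eventually_elim
      fix x assume h: "ennreal (f x) * indicator (ball y r') x = 0"
      show "x \<notin> ball y r'"
      proof
        assume xb: "x \<in> ball y r'"
        then have "f x > 0" using subE fp by blast
        then show False using h xb by (simp add: indicator_def)
      qed
    qed
    then have "ball y r' \<in> null_sets lborel" by (subst AE_iff_null_sets) auto
    moreover have "emeasure lborel (ball y r') > 0"
      using emeasure_ball[of r' y] r' by simp
    ultimately show False by auto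
  qed
  also have "\<dots> \<le> (\<integral>\<^sup>+ x. ennreal (f x) * indicator (ball t \<eta>) x \<partial>lborel)"
    using sub by (intro nn_integral_mono) (auto simp: indicator_def)
  also have "\<dots> = emeasure M (X -` ball t \<eta> \<inter> space M)"
    by (rule dist_emeasure[OF D, symmetric]) auto
  finally show ?thesis .
qed



lemma targets:
  fixes p c :: "'a::real_normed_vector"
  assumes E: "convex E" "p \<in> E" "c \<in> E" and L: "L \<le> dist p c" "0 < L"
  defines "\<tau> \<equiv> \<lambda>i. p + (L / 3^i / dist p c) *\<^sub>R (c - p)"
  shows "dist p (\<tau> i) = L/3^i" "\<tau> i \<in> E" "l < i \<Longrightarrow> 2*(L/3^i) \<le> dist (\<tau> l) (\<tau> i)"
proof -
  define d where "d = dist p c"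
  have d: "0 < d" using L unfolding d_def by linarith
  have nd: "norm (c - p) = d" unfolding d_def by (simp add: dist_norm norm_minus_commute)
  have s: "0 < L/3^i" "L/3^i \<le> L" for i :: nat using L by (auto simp: divide_simps)
  show "dist p (\<tau> i) = L/3^i"
    unfolding \<tau>_def d_def[symmetric] dist_norm using d s[of i] by (simp add: nd norm_minus_commute)
  have p3: "(1::real) \<le> 3^i" by simp
  have "1 * d \<le> 3^i * d" using p3 d by (intro mult_right_mono) auto
  then have h3: "L \<le> 3^i * d" using L(1) unfolding d_def[symmetric] by linarith
  have t: "0 \<le> L/3^i/d" "L/3^i/d \<le> 1" using d s[of i] h3 by (auto simp: divide_simps)
  have "\<tau> i = (1 - L/3^i/d) *\<^sub>R p + (L/3^i/d) *\<^sub>R c"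
    unfolding \<tau>_def d_def by (simp add: algebra_simps)
  then show "\<tau> i \<in> E" using convexD[OF E(1) E(2) E(3), of "1 - L/3^i/d" "L/3^i/d"] t by simp
  assume li: "l < i"
  have "(3::real)^i = 3^(i - l) * 3^l" using li by (simp flip: power_add)
  moreover have "(3::real)^1 \<le> 3^(i-l)" by (rule power_increasing) (use li in auto)
  ultimately have "3 * 3^l \<le> (3::real)^i" by simp
  then have lt: "3 * (L/3^i) \<le> L/3^l" using L by (simp add: divide_simps mult.commute mult_left_mono)
  have "\<tau> l - \<tau> i = ((L/3^l - L/3^i)/d) *\<^sub>R (c - p)"
    unfolding \<tau>_def d_def by (simp add: algebra_simps diff_divide_distrib)
  then have "dist (\<tau> l) (\<tau> i) = L/3^l - L/3^i"
    unfolding dist_norm using d lt s[of i] by (simp add: nd norm_minus_commute)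
  then show "2*(L/3^i) \<le> dist (\<tau> l) (\<tau> i)" using lt by simp
qed


theorem corollary1:
  fixes M :: "'w measure"
    and E :: "'a::euclidean_space set"
    and f :: "'a \<Rightarrow> real"
    and k :: nat and lam :: real
    and x0 :: "nat \<Rightarrow> 'a" and w0 :: "nat \<Rightarrow> real"
    and z :: "nat \<Rightarrow> 'w \<Rightarrow> 'a"
  assumes "prob_space M"
    and "bounded E" and "convex E" and "closed E" and "interior E \<noteq> {}"
    and "\<And>x. x \<in> E \<Longrightarrow> f x > 0"
    and "\<And>x. x \<notin> E \<Longrightarrow> f x = 0"
    and "k \<ge> 2" and "lam > 0"
    and "\<And>i. i \<in> {1..k} \<Longrightarrow> x0 i \<in> E"
    and "\<And>i j. i \<in> {1..k} \<Longrightarrow> j \<in> {1..k} \<Longrightarrow> i \<noteq> j \<Longrightarrow> x0 i \<noteq> x0 j"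
    and "\<And>i. i \<in> {1..k} \<Longrightarrow> w0 i > 0"
    and "prob_space.indep_vars M (\<lambda>_. borel) z UNIV"
    and "\<And>n. distributed M lborel (z n) (\<lambda>x. ennreal (f x))"
    and "j \<in> {1..k}"
  shows "\<not> (\<exists>Y. Y \<in> borel_measurable M \<and>
              conv_in_prob M (\<lambda>n \<omega>. fst (kme_state lam k x0 w0 (\<lambda>m. z m \<omega>) n) j) Y)"
proof
  assume "\<exists>Y. Y \<in> borel_measurable M \<and> conv_in_prob M (\<lambda>n \<omega>. fst (kme_state lam k x0 w0 (\<lambda>m. z m \<omega>) n) j) Y"
  then obtain Y where Y: "Y \<in> borel_measurable M"
    and conv: "conv_in_prob M (\<lambda>n \<omega>. fst (kme_state lam k x0 w0 (\<lambda>m. z m \<omega>) n) j) Y" by blast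
  interpret P: prob_space M by fact
  define X where "X = (\<lambda>n \<omega>. fst (kme_state lam k x0 w0 (\<lambda>m. z m \<omega>) n) j)"
  have k1: "1 \<le> k" using assms(8) by simp
  have zm: "\<And>m. z m \<in> borel_measurable M"
    using assms(13) unfolding P.indep_vars_def by auto
  have Xm: "\<And>n. X n \<in> borel_measurable M"
    unfolding X_def using meas_state[of _ z M] zm by blast
  define W where "W = max (Max (w0 ` {1..k})) (1/(1-exp(-lam)))"
  have el: "exp(-lam) < 1" using assms(9) by simp
  have Wl: "W * (1 - exp(-lam)) \<ge> 1"
  proof -
    have "1/(1-exp(-lam)) \<le> W" unfolding W_def by simp
    then have "1/(1-exp(-lam)) * (1 - exp(-lam)) \<le> W * (1-exp(-lam))"
      using el by (intro mult_right_mono) auto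
    then show ?thesis using el by simp
  qed
  have G0: "Good W k (x0, w0)"
    unfolding Good_def
  proof
    fix i assume i: "i \<in> {1..k}"
    have "w0 i \<le> Max (w0 ` {1..k})" using i by simp
    then show "0 \<le> snd (x0,w0) i \<and> snd (x0,w0) i \<le> W" using assms(12)[OF i] unfolding W_def by auto
  qed
  have W0: "0 \<le> W" using G0 k1 unfolding Good_def by force
  define a0 where "a0 = 1/(W*exp(-lam)+1)"
  have We: "0 \<le> W * exp (-lam)" using W0 by simp
  have a0: "0 < a0" "a0 \<le> 1" unfolding a0_def using We by (auto simp: divide_simps)
  obtain c where c: "c \<in> interior E" using assms(5) by blast
  obtain r where r: "r > 0" "ball c r \<subseteq> E" using c mem_interior by blast
  obtain bv :: 'a where bv: "bv \<in> Basis" using nonempty_Basis by blast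
  have nb: "norm bv = 1" using bv by simp
  define e1 where "e1 = c + (r/2) *\<^sub>R bv"
  define e2 where "e2 = c - (r/2) *\<^sub>R bv"
  have e12: "e1 \<in> E" "e2 \<in> E"
    using r nb unfolding e1_def e2_def by (auto intro!: subsetD[OF r(2)] simp: dist_norm)
  have de: "dist e1 e2 = r" unfolding e1_def e2_def dist_norm using r nb
    by (simp add: algebra_simps flip: scaleR_add_left)
  define L where "L = r/2"
  have L0: "0 < L" unfolding L_def using r by simp
  have far: "\<exists>c'. c' \<in> E \<and> L \<le> dist p c'" for p
  proof -
    have "r \<le> dist p e1 + dist p e2" using de dist_triangle[of e1 e2 p] by (simp add: dist_commute)
    then have "L \<le> dist p e1 \<or> L \<le> dist p e2" unfolding L_def by linarith
    then show ?thesis using e12 by blast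
  qed
  define cc where "cc p = (SOME c'. c' \<in> E \<and> L \<le> dist p c')" for p
  have cc: "cc p \<in> E" "L \<le> dist p (cc p)" for p
    using someI_ex[OF far[of p]] unfolding cc_def by auto
  define \<sigma> where "\<sigma> i = L/3^i" for i :: nat
  define \<sigma>m where "\<sigma>m = L/3^(k-1)"
  define \<delta> where "\<delta> = \<sigma>m/8"
  define \<gamma> where "\<gamma> = \<sigma>m/8"
  define \<eta> where "\<eta> = min (\<sigma>m/8) (a0*\<gamma>/4)"
  have sm0: "0 < \<sigma>m" unfolding \<sigma>m_def using L0 by simp
  have d0: "0 < \<delta>" "0 < \<gamma>" unfolding \<delta>_def \<gamma>_def using sm0 by auto
  have eta0: "0 < \<eta>" unfolding \<eta>_def using sm0 d0 a0 by auto
  have sgap: "2*\<eta> + \<gamma> + \<delta> < \<sigma>m"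
  proof -
    have "\<eta> \<le> \<sigma>m/8" unfolding \<eta>_def by simp
    then show ?thesis unfolding \<gamma>_def \<delta>_def using sm0 by linarith
  qed
  have smle: "\<sigma>m \<le> \<sigma> i" if "i < k" for i
  proof -
    have "(3::real)^i \<le> 3^(k-1)" using that by (intro power_increasing) auto
    then show ?thesis unfolding \<sigma>m_def \<sigma>_def using L0 by (intro divide_left_mono) auto
  qed
  have sMle: "\<sigma> i \<le> L" for i unfolding \<sigma>_def using L0 by (simp add: divide_simps)
  have pos1: "0 < \<gamma>/2/(L+\<delta>)" using d0 L0 by simp
  obtain R where R: "(1-a0)^R < \<gamma>/2/(L+\<delta>)"
    using real_arch_pow_inv[OF pos1, of "1-a0"] a0 by auto
  have RR: "(1-a0)^R * (L+\<delta>) + 2*\<eta>/a0 \<le> \<gamma>"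
  proof -
    have "(1-a0)^R * (L+\<delta>) < \<gamma>/2/(L+\<delta>) * (L+\<delta>)" using R d0 L0 by (intro mult_strict_right_mono) auto
    also have "\<dots> = \<gamma>/2" using d0 L0 by (simp add: field_simps)
    finally have "(1-a0)^R * (L+\<delta>) < \<gamma>/2" .
    moreover have "2*\<eta>/a0 \<le> \<gamma>/2"
    proof -
      have "\<eta> \<le> a0*\<gamma>/4" unfolding \<eta>_def by simp
      then show ?thesis using a0 by (simp add: divide_simps; simp add: algebra_simps)
    qed
    ultimately show ?thesis by linarith
  qed
  define K where "K = k*R"
  define \<tau> where "\<tau> p i = p + (L / 3^i / dist p (cc p)) *\<^sub>R (cc p - p)" for p i
  have tg1: "dist p (\<tau> p i) = \<sigma> i" if "p \<in> E" for p i
    unfolding \<tau>_def \<sigma>_def by (rule targets(1)[OF assms(3) that cc L0])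
  have tg2: "\<tau> p i \<in> E" if "p \<in> E" for p i
    unfolding \<tau>_def by (rule targets(2)[OF assms(3) that cc L0])
  have tg3: "2 * \<sigma> i \<le> dist (\<tau> p l) (\<tau> p i)" if "p \<in> E" "l < i" for p l i
    unfolding \<tau>_def \<sigma>_def by (rule targets(3)[OF assms(3) that(1) cc L0 that(2)])
  define \<epsilon>0 where "\<epsilon>0 = a0 * (\<sigma>m - \<eta> - \<delta>)"
  have e0: "0 < \<epsilon>0" unfolding \<epsilon>0_def using a0 sgap d0 eta0 by simp
  have det: "\<exists>m<K. \<epsilon>0 \<le> dist (X (n + Suc m) \<omega>) (X n \<omega>)"
    if p: "p \<in> E" and xp: "dist (X n \<omega>) p < \<delta>" and zt: "\<forall>m<K. dist (z (n+m) \<omega>) (\<tau> p (m div R)) < \<eta>"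
    for n \<omega> p
  proof -
    let ?s = "kme_state lam k x0 w0 (\<lambda>m. z m \<omega>) n"
    have "\<exists>m<k*R. dist (fst (kme_state lam k (fst ?s) (snd ?s) (\<lambda>m. z (n+m) \<omega>) (Suc m)) j) (fst ?s j) \<ge> a0*(\<sigma>m - \<eta> - \<delta>)"
      unfolding a0_def
    proof (rule core[OF k1 assms(15) kme_state_Good[OF k1 G0 Wl] Wl])
      show "dist (fst ?s j) p < \<delta>" using xp unfolding X_def .
      show "dist p (\<tau> p i) = \<sigma> i" if "i < k" for i using tg1[OF p] .
      show "2 * \<sigma> i \<le> dist (\<tau> p l) (\<tau> p i)" if "l < i" "i < k" for l i using tg3[OF p that(1)] .
      show "\<sigma>m \<le> \<sigma> i" if "i < k" for i using smle[OF that] .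
      show "\<sigma> i \<le> L" if "i < k" for i using sMle .
      show "2*\<eta> + \<gamma> + \<delta> < \<sigma>m" by (rule sgap)
      show "0 < \<eta>" by (rule eta0)
      show "(1 - 1 / (W * exp (- lam) + 1)) ^ R * (L + \<delta>) + 2 * \<eta> / (1 / (W * exp (- lam) + 1)) \<le> \<gamma>"
        using RR unfolding a0_def .
      show "dist (z (n+m) \<omega>) (\<tau> p (m div R)) < \<eta>" if "m < k*R" for m using zt that unfolding K_def by blast
    qed
    then obtain m where m: "m < k*R"
      "a0*(\<sigma>m - \<eta> - \<delta>) \<le> dist (fst (kme_state lam k (fst ?s) (snd ?s) (\<lambda>m. z (n+m) \<omega>) (Suc m)) j) (fst ?s j)"
      by blast
    have eq: "X (n + Suc m) \<omega> = fst (kme_state lam k (fst ?s) (snd ?s) (\<lambda>i. z (n+i) \<omega>) (Suc m)) j"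
      unfolding X_def by (simp only: kme_state_shift)
    have eq2: "X n \<omega> = fst ?s j" unfolding X_def by simp
    show ?thesis using m eq eq2 unfolding K_def \<epsilon>0_def by metis
  qed
  note Xm[measurable] zm[measurable] Y[measurable]
  have cE: "compact E" using assms(2,4) compact_eq_bounded_closed by blast
  have Ecov: "E \<subseteq> (\<Union>p\<in>E. ball p \<delta>)" using d0 by auto
  obtain F where F: "F \<subseteq> E" "finite F" "E \<subseteq> (\<Union>p\<in>F. ball p \<delta>)"
    by (rule compactE_image[OF cE _ Ecov]) auto
  have Ene: "E \<noteq> {}" using e12 by auto
  have Fne: "F \<noteq> {}" using F(3) Ene by auto
  have zsame: "P.prob (z m -` A \<inter> space M) = P.prob (z 0 -` A \<inter> space M)" if "A \<in> sets borel" for m A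
    using dist_emeasure[OF assms(14)[of m] that] dist_emeasure[OF assms(14)[of 0] that] by (simp add: measure_def)
  have ballpos: "0 < P.prob (z 0 -` ball t \<eta> \<inter> space M)" if "t \<in> E" for t
  proof -
    have "0 < emeasure M (z 0 -` ball t \<eta> \<inter> space M)"
      by (rule dist_ball_pos[OF assms(14)[of 0] assms(3) assms(5) assms(6) that eta0])
    then show ?thesis by (simp add: P.emeasure_eq_measure)
  qed
  define Q where "Q p = (\<Prod>m<K. P.prob (z 0 -` ball (\<tau> p (m div R)) \<eta> \<inter> space M))" for p
  have Qpos: "0 < Q p" if "p \<in> E" for p unfolding Q_def using ballpos tg2[OF that] by (intro prod_pos) auto
  define qm where "qm = Min (Q ` F)"
  have qm: "0 < qm" "\<And>p. p \<in> F \<Longrightarrow> qm \<le> Q p" unfolding qm_def using F Fne Qpos by auto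
  define cst where "cst = qm / card F"
  have cF: "0 < card F" using F(2) Fne by (simp add: card_gt_0_iff)
  have cst: "0 < cst" using qm cF unfolding cst_def by simp
  have aeE: "P.prob {\<omega>\<in>space M. X n \<omega> \<in> E} = 1" for n
  proof -
    have ae1: "AE \<omega> in M. z m \<omega> \<in> E" for m
    proof -
      have s1: "emeasure M (z m -` (- E) \<inter> space M) = 0"
        by (rule dist_outside_null[OF assms(14) assms(4) assms(7)])
      have s2: "z m -` (- E) \<inter> space M \<in> sets M"
        using assms(4) by (intro measurable_sets[OF zm]) auto
      have s3: "{\<omega>\<in>space M. \<not> z m \<omega> \<in> E} = z m -` (- E) \<inter> space M" by auto
      show ?thesis using AE_iff_measurable[OF s2 s3] s1 by simp
    qed
    have "AE \<omega> in M. \<forall>m. z m \<omega> \<in> E" using ae1 by (simp add: AE_all_countable)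
    then have aeX: "AE \<omega> in M. X n \<omega> \<in> E"
    proof eventually_elim
      fix \<omega> assume "\<forall>m. z m \<omega> \<in> E"
      show "X n \<omega> \<in> E"
        unfolding X_def
        by (rule kme_state_in[where W=W])
          (use k1 G0 Wl assms(3) assms(10) assms(15) \<open>\<forall>m. z m \<omega> \<in> E\<close> in auto)
    qed
    have SS: "{\<omega>\<in>space M. X n \<omega> \<in> E} \<in> sets M"
    proof -
      have "{\<omega>\<in>space M. X n \<omega> \<in> E} = X n -` E \<inter> space M" by auto
      also have "\<dots> \<in> sets M" using assms(4) by (intro measurable_sets[OF Xm]) auto
      finally show ?thesis .
    qed
    show ?thesis using P.prob_Collect_eq_1[OF SS] aeX by simp
  qed
  define Succ where "Succ n = {\<omega>\<in>space M. \<exists>m<K. \<epsilon>0/2 < dist (X (n + Suc m) \<omega>) (X n \<omega>)}" for n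
  have Succ_sets: "Succ n \<in> sets M" for n unfolding Succ_def by measurable
  have key: "cst \<le> P.prob (Succ n)" for n
  proof -
    define A where "A p = {\<omega>\<in>space M. X n \<omega> \<in> ball p \<delta>}" for p
    have Asets: "A p \<in> sets M" for p
    proof -
      have "A p = X n -` ball p \<delta> \<inter> space M" unfolding A_def by auto
      also have "\<dots> \<in> sets M" by (intro measurable_sets[OF Xm]) auto
      finally show ?thesis .
    qed
    have "{\<omega>\<in>space M. X n \<omega> \<in> E} \<subseteq> (\<Union>p\<in>F. A p)" using F(3) unfolding A_def by blast
    then have "P.prob {\<omega>\<in>space M. X n \<omega> \<in> E} \<le> P.prob (\<Union>p\<in>F. A p)"
      using Asets F(2) by (intro P.finite_measure_mono) auto
    also have "\<dots> \<le> (\<Sum>p\<in>F. P.prob (A p))"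
      using F(2) Asets by (intro P.finite_measure_subadditive_finite) auto
    finally have s1: "1 \<le> (\<Sum>p\<in>F. P.prob (A p))" using aeE[of n] by simp
    have "\<exists>p\<in>F. 1 / card F \<le> P.prob (A p)"
    proof (rule ccontr)
      assume "\<not> ?thesis"
      then have "\<forall>p\<in>F. P.prob (A p) < 1 / card F" by auto
      then have "(\<Sum>p\<in>F. P.prob (A p)) < (\<Sum>p\<in>F. 1 / card F)"
        using F(2) Fne by (intro sum_strict_mono) auto
      also have "\<dots> = 1" using cF by simp
      finally show False using s1 by simp
    qed
    then obtain p where p: "p \<in> F" "1 / card F \<le> P.prob (A p)" by blast
    have pE: "p \<in> E" using p F by auto
    define B where "B = {\<omega>\<in>space M. \<forall>m<K. z (n+m) \<omega> \<in> ball (\<tau> p (m div R)) \<eta>}"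
    have "A p \<inter> B \<subseteq> Succ n"
    proof
      fix \<omega> assume w: "\<omega> \<in> A p \<inter> B"
      then have h: "dist (X n \<omega>) p < \<delta>" "\<forall>m<K. dist (z (n+m) \<omega>) (\<tau> p (m div R)) < \<eta>" "\<omega> \<in> space M"
        unfolding A_def B_def by (auto simp: dist_commute)
      then obtain m where "m<K" "\<epsilon>0 \<le> dist (X (n + Suc m) \<omega>) (X n \<omega>)" using det[OF pE] by blast
      then show "\<omega> \<in> Succ n" unfolding Succ_def using e0 h(3) by force
    qed
    then have "P.prob (A p \<inter> B) \<le> P.prob (Succ n)" using Succ_sets by (rule P.finite_measure_mono)
    moreover have "P.prob (A p \<inter> B) = P.prob (A p) * Q p"
    proof -
      define I1 where "I1 = {..<n}"
      define I2 where "I2 = {n..<n+K}"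
      have Kpos: "0 < K"
      proof (rule ccontr)
        assume "\<not> 0 < K"
        then have "R = 0" unfolding K_def using k1 by simp
        then have "(1-a0)^R * (L+\<delta>) = L+\<delta>" by simp
        moreover have "0 \<le> 2*\<eta>/a0" using eta0 a0 by simp
        ultimately have "L + \<delta> \<le> \<gamma>" using RR by linarith
        then show False using sMle[of "k-1"] smle[of "k-1"] k1 d0 unfolding \<gamma>_def \<delta>_def by simp
      qed
      have ind: "P.indep_var (PiM I1 (\<lambda>_. borel)) (\<lambda>\<omega>. restrict (\<lambda>i. z i \<omega>) I1)
                             (PiM I2 (\<lambda>_. borel)) (\<lambda>\<omega>. restrict (\<lambda>i. z i \<omega>) I2)"
        by (rule P.indep_var_restrict[OF assms(13)]) (auto simp: I1_def I2_def)
      define G where "G g = fst (kme_state lam k x0 w0 g n) j" for g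
      have Gm: "G \<in> borel_measurable (PiM I1 (\<lambda>_. borel))"
      proof -
        have "(\<lambda>g. fst (kme_state lam k x0 w0 (\<lambda>m. g m) n) j) \<in> borel_measurable (PiM I1 (\<lambda>_. borel))"
          using meas_state[of n "\<lambda>m g. g m" "PiM I1 (\<lambda>_. borel)" lam k x0 w0 j] by (auto simp: I1_def)
        then show ?thesis unfolding G_def by simp
      qed
      define Xa where "Xa = G -` ball p \<delta> \<inter> space (PiM I1 (\<lambda>_. borel))"
      define Xb where "Xb = (\<Inter>m\<in>{..<K}. (\<lambda>g. g (n+m)) -` ball (\<tau> p (m div R)) \<eta> \<inter> space (PiM I2 (\<lambda>_. borel)))"
      have Xa_sets: "Xa \<in> sets (PiM I1 (\<lambda>_. borel))" unfolding Xa_def by (rule measurable_sets[OF Gm]) auto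
      have Xb_sets: "Xb \<in> sets (PiM I2 (\<lambda>_. borel))" unfolding Xb_def
      proof (rule sets.finite_INT)
        fix m assume "m \<in> {..<K}"
        then have "n + m \<in> I2" unfolding I2_def by auto
        then show "(\<lambda>g. g (n+m)) -` ball (\<tau> p (m div R)) \<eta> \<inter> space (PiM I2 (\<lambda>_. borel)) \<in> sets (PiM I2 (\<lambda>_. borel))"
          by (intro measurable_sets[OF measurable_component_singleton]) auto
      qed (use Kpos in auto)
      have eqA: "(\<lambda>\<omega>. restrict (\<lambda>i. z i \<omega>) I1) -` Xa \<inter> space M = A p"
      proof -
        have "G (restrict (\<lambda>i. z i \<omega>) I1) = X n \<omega>" for \<omega>
          unfolding G_def X_def by (rule arg_cong[where f="\<lambda>s. fst s j"], rule kme_state_cong) (simp add: I1_def)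
        then show ?thesis unfolding Xa_def A_def by (auto simp: space_PiM I1_def)
      qed
      have eqB: "(\<lambda>\<omega>. restrict (\<lambda>i. z i \<omega>) I2) -` Xb \<inter> space M = B"
        unfolding Xb_def B_def using Kpos by (auto simp: space_PiM I2_def)
      have "P.prob (A p \<inter> B) = P.prob ((\<lambda>\<omega>. (restrict (\<lambda>i. z i \<omega>) I1, restrict (\<lambda>i. z i \<omega>) I2)) -` (Xa \<times> Xb) \<inter> space M)"
        using eqA eqB by (intro arg_cong[where f=P.prob]) auto
      also have "\<dots> = P.prob (A p) * P.prob B"
        using P.indep_varD[OF ind Xa_sets Xb_sets] eqA eqB by simp
      also have "P.prob B = Q p"
      proof -
        define C where "C i = ball (\<tau> p ((i - n) div R)) \<eta>" for i
        have "B = (\<Inter>i\<in>I2. z i -` C i \<inter> space M)"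
        proof
          show "B \<subseteq> (\<Inter>i\<in>I2. z i -` C i \<inter> space M)"
          proof
            fix \<omega> assume "\<omega> \<in> B"
            then have h: "\<omega> \<in> space M" "\<And>m. m < K \<Longrightarrow> z (n+m) \<omega> \<in> ball (\<tau> p (m div R)) \<eta>" unfolding B_def by auto
            show "\<omega> \<in> (\<Inter>i\<in>I2. z i -` C i \<inter> space M)"
            proof
              fix i assume "i \<in> I2"
              then have i: "i = n + (i - n)" "i - n < K" unfolding I2_def by auto
              then show "\<omega> \<in> z i -` C i \<inter> space M" using h(1) h(2)[OF i(2)] unfolding C_def by (metis IntI vimageI)
            qed
          qed
          show "(\<Inter>i\<in>I2. z i -` C i \<inter> space M) \<subseteq> B"
          proof
            fix \<omega> assume h: "\<omega> \<in> (\<Inter>i\<in>I2. z i -` C i \<inter> space M)"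
            have "n \<in> I2" unfolding I2_def using Kpos by auto
            then have "\<omega> \<in> space M" using h by blast
            moreover have "z (n+m) \<omega> \<in> ball (\<tau> p (m div R)) \<eta>" if "m < K" for m
            proof -
              have "n + m \<in> I2" unfolding I2_def using that by auto
              then have "\<omega> \<in> z (n+m) -` C (n+m) \<inter> space M" using h by blast
              then show ?thesis unfolding C_def by simp
            qed
            ultimately show "\<omega> \<in> B" unfolding B_def by auto
          qed
        qed
        then have BB: "P.prob B = P.prob (\<Inter>i\<in>I2. z i -` C i \<inter> space M)" by simp
        have c1: "P.prob (\<Inter>i\<in>I2. z i -` C i \<inter> space M) = (\<Prod>i\<in>I2. P.prob (z i -` C i \<inter> space M))"
          using Kpos unfolding I2_def C_def by (intro P.indep_varsD[OF assms(13)]) auto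
        have I2e: "I2 = {0+n..<K+n}" unfolding I2_def by (simp add: add.commute)
        have "(\<Prod>i\<in>{0+n..<K+n}. P.prob (z i -` C i \<inter> space M)) = (\<Prod>m\<in>{0..<K}. P.prob (z (m + n) -` C (m + n) \<inter> space M))"
          by (rule prod.shift_bounds_nat_ivl)
        also have "\<dots> = Q p"
          unfolding Q_def atLeast0LessThan
        proof (rule prod.cong)
          fix m assume "m \<in> {..<K}"
          have "C (m + n) = ball (\<tau> p (m div R)) \<eta>" unfolding C_def by simp
          then show "P.prob (z (m + n) -` C (m + n) \<inter> space M) = P.prob (z 0 -` ball (\<tau> p (m div R)) \<eta> \<inter> space M)"
            using zsame[of "ball (\<tau> p (m div R)) \<eta>" "m+n"] by simp
        qed simp
        finally have c2: "(\<Prod>i\<in>I2. P.prob (z i -` C i \<inter> space M)) = Q p" unfolding I2e .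
        show "P.prob B = Q p" using BB c1 c2 by linarith
      qed
      finally show ?thesis .
    qed
    moreover have "cst \<le> P.prob (A p) * Q p"
    proof -
      have "cst = Q p * (1 / card F) - (Q p - qm) / card F" unfolding cst_def by (simp add: diff_divide_distrib)
      also have "\<dots> \<le> Q p * (1 / card F)" using qm(2)[OF p(1)] cF by simp
      also have "\<dots> \<le> Q p * P.prob (A p)" using p(2) Qpos[OF pE] by (intro mult_left_mono) auto
      finally show ?thesis by (simp add: mult.commute)
    qed
    ultimately show ?thesis by linarith
  qed
  define S1 where "S1 n = {\<omega>\<in>space M. \<epsilon>0/4 < dist (X n \<omega>) (Y \<omega>)}" for n
  have S1sets: "S1 n \<in> sets M" for n unfolding S1_def by measurable
  have up: "P.prob (Succ n) \<le> (\<Sum>m\<le>K. P.prob (S1 (n+m)))" for n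
  proof -
    have "Succ n \<subseteq> (\<Union>m\<le>K. S1 (n+m))"
    proof
      fix \<omega> assume "\<omega> \<in> Succ n"
      then obtain m where m: "m<K" "\<epsilon>0/2 < dist (X (n + Suc m) \<omega>) (X n \<omega>)" "\<omega>\<in>space M"
        unfolding Succ_def by auto
      have "dist (X (n+Suc m) \<omega>) (X n \<omega>) \<le> dist (X (n+Suc m) \<omega>) (Y \<omega>) + dist (X n \<omega>) (Y \<omega>)"
        by (rule dist_triangle2)
      then have "\<epsilon>0/4 < dist (X (n+Suc m) \<omega>) (Y \<omega>) \<or> \<epsilon>0/4 < dist (X (n+0) \<omega>) (Y \<omega>)" using m(2) by auto
      then show "\<omega> \<in> (\<Union>m\<le>K. S1 (n+m))"
      proof
        assume "\<epsilon>0/4 < dist (X (n+Suc m) \<omega>) (Y \<omega>)"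
        then have "\<omega> \<in> S1 (n + Suc m)" unfolding S1_def using m(3) by auto
        then show ?thesis using m(1) by (intro UN_I[of "Suc m"]) auto
      next
        assume "\<epsilon>0/4 < dist (X (n+0) \<omega>) (Y \<omega>)"
        then have "\<omega> \<in> S1 (n + 0)" unfolding S1_def using m(3) by auto
        then show ?thesis by (intro UN_I[of 0]) auto
      qed
    qed
    then have "P.prob (Succ n) \<le> P.prob (\<Union>m\<le>K. S1 (n+m))"
      using S1sets by (intro P.finite_measure_mono) auto
    also have "\<dots> \<le> (\<Sum>m\<le>K. P.prob (S1 (n+m)))"
      using S1sets by (intro P.finite_measure_subadditive_finite) auto
    finally show ?thesis .
  qed
  have lim: "(\<lambda>n. \<Sum>m\<le>K. P.prob (S1 (n+m))) \<longlonglongrightarrow> 0"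
  proof -
    have c1: "(\<lambda>n. P.prob (S1 n)) \<longlonglongrightarrow> 0"
      using conv[unfolded conv_in_prob_def, rule_format, of "\<epsilon>0/4"] e0 unfolding S1_def X_def by simp
    have "(\<lambda>n. P.prob (S1 (n+m))) \<longlonglongrightarrow> 0" for m
      using LIMSEQ_ignore_initial_segment[OF c1, of m] by simp
    then have "(\<lambda>n. \<Sum>m\<le>K. P.prob (S1 (n+m))) \<longlonglongrightarrow> (\<Sum>m\<le>K. 0)" by (intro tendsto_sum) auto
    then show ?thesis by simp
  qed
  have "cst \<le> 0"
    by (rule LIMSEQ_le_const[OF lim]) (use key up in \<open>auto intro: order_trans\<close>)
  then show False using cst by simp
qed


end
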